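(* For every positive integer $k$, the maximum cardinality of an avoidable subset of $\overline{S_k}$ is $k!-k$.
   Context: For $\sigma\in S_n$, the cyclic permutation $[\sigma]$ is the set of all rotations of $\sigma$. For $\pi\in S_k$, the totally vincular pattern $\overline{\pi}$ is $\pi$ with all adjacent positions overlined; a cyclic permutation $[\sigma]$ of length $n\ge k$ contains $\overline{\pi}$ if some $k$ cyclically consecutive entries of $\sigma$ are order-isomorphic to $\pi$. $\overline{S_k}$ is the set of totally vincular patterns of length $k$. For $\Pi\subseteq\overline{S_k}$, $\mathrm{Av}_n[\Pi]$ is the set of cyclic permutations of length $n$ containing no pattern of $\Pi$. $\Pi$ is unavoidable if $|\mathrm{Av}_n[\Pi]|=0$ for all sufficiently large $n$, and avoidable otherwise (i.e. $|\mathrm{Av}_n[\Pi]|>0$ for arbitrarily large $n$). *)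

theory Defs
  imports Main
begin

definition perms :: "nat \<Rightarrow> nat list set" where
  "perms n = {xs. distinct xs \<and> set xs = {0..<n}}"

definition order_iso :: "nat list \<Rightarrow> nat list \<Rightarrow> bool" where
  "order_iso xs ys \<longleftrightarrow> length xs = length ys \<and>
     (\<forall>i<length xs. \<forall>j<length xs. (xs ! i < xs ! j) = (ys ! i < ys ! j))"

text \<open>The cyclic permutation [sigma]: the set of all rotations of sigma.\<close>
definition cyc :: "nat list \<Rightarrow> nat list set" where
  "cyc \<sigma> = {rotate r \<sigma> | r. r < length \<sigma>}"

text \<open>The cyclic permutation [sigma] (length n >= k) contains the totally vincular
  pattern overline pi: some k cyclically consecutive entries are order-isomorphic to pi.\<close>
definition cyc_contains :: "nat list \<Rightarrow> nat list \<Rightarrow> bool" where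
  "cyc_contains \<sigma> \<pi> \<longleftrightarrow> length \<pi> \<le> length \<sigma> \<and>
     (\<exists>r<length \<sigma>. order_iso (take (length \<pi>) (rotate r \<sigma>)) \<pi>)"

definition Av :: "nat \<Rightarrow> nat list set \<Rightarrow> nat list set set" where
  "Av n \<Pi> = {cyc \<sigma> | \<sigma>. \<sigma> \<in> perms n \<and> (\<forall>\<pi>\<in>\<Pi>. \<not> cyc_contains \<sigma> \<pi>)}"

definition avoidable :: "nat list set \<Rightarrow> bool" where
  "avoidable \<Pi> \<longleftrightarrow> (\<forall>N. \<exists>n\<ge>N. card (Av n \<Pi>) > 0)"

end

theory Submission
  imports Defs
begin

lemma per_mod:
  fixes s :: "nat \<Rightarrow> nat"
  assumes per: "\<And>i. s (i + n) = s i"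
  shows "s x = s (x mod n)"
proof -
  have "\<And>q. s (r + q * n) = s r" for r
  proof -
    fix q show "s (r + q * n) = s r"
      by (induction q) (auto, metis add.commute add.left_commute per)
  qed
  from this[of "x mod n" "x div n"] show ?thesis by simp
qed

lemma main_count:
  fixes s :: "nat \<Rightarrow> nat" and n :: nat
  assumes per: "\<And>i. s (i + n) = s i"
    and inj: "\<And>i i'. s i = s i' \<Longrightarrow> i mod n = i' mod n"
    and n1: "n \<ge> 1"
  shows "j \<le> n \<Longrightarrow>
     j \<le> card ((\<lambda>i. (\<lambda>a b. a < j \<and> b < j \<and> s (i+a) < s (i+b))) ` {..<n})"
proof (induction j)
  case 0
  then show ?case by simp
next
  case (Suc j)
  define P where "P = (\<lambda>j i. (\<lambda>a b. a < j \<and> b < j \<and> s (i+a) < s (i+b)))"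
  define D where "D = (\<lambda>j. P j ` {..<n})"
  have finD: "finite (D j)" for j unfolding D_def by simp
  have Pmod: "P j i = P j (i mod n)" for j i
  proof -
    have "s (i + a) = s (i mod n + a)" for a
      using per_mod[of s n, OF per] by (metis mod_add_left_eq)
    then show ?thesis unfolding P_def by simp
  qed
  have PinD: "P j i \<in> D j" for j i
    unfolding D_def using Pmod[of j i] n1 by auto
  define \<rho> where "\<rho> = (\<lambda>F a b. a < j \<and> b < j \<and> (F a b :: bool))"
  have rhoP: "\<rho> (P (Suc j) i) = P j i" for i
    unfolding \<rho>_def P_def by (auto intro!: ext)
  have Dimg: "D j = \<rho> ` D (Suc j)"
    unfolding D_def by (auto simp: image_image rhoP)
  have IH: "j \<le> card (D j)" using Suc by (simp add: D_def P_def)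
  have le: "card (D j) \<le> card (D (Suc j))"
    unfolding Dimg by (rule card_image_le[OF finD])
  show ?case
  proof (rule ccontr)
    assume "\<not> ?thesis"
    then have lt: "card (D (Suc j)) < Suc j" by (simp add: D_def P_def)
    have cj: "card (D j) = j" and cSj: "card (D (Suc j)) = j" using IH le lt by auto
    have injr: "inj_on \<rho> (D (Suc j))"
      using eq_card_imp_inj_on[OF finD] cj cSj Dimg by metis
    have lift: "P (Suc j) i = P (Suc j) i'" if "P j i = P j i'" for i i'
      using injr PinD that rhoP by (metis inj_on_def)
    have shift: "P j (Suc i) = (\<lambda>a b. P (Suc j) i (Suc a) (Suc b))" for i
      unfolding P_def by (auto intro!: ext)
    have propag: "P j (i + m) = P j (i' + m)" if "P j i = P j i'" for i i' m
      using that
    proof (induction m)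
      case 0 then show ?case by simp
    next
      case (Suc m)
      then show ?case using lift[of "i+m" "i'+m"] shift[of "i+m"] shift[of "i'+m"] by simp
    qed
    have "\<not> inj_on (P j) {..j}"
    proof
      assume "inj_on (P j) {..j}"
      then have "card {..j} \<le> card (D j)"
        using card_inj_on_le[of "P j" "{..j}" "D j"] finD PinD by blast
      then show False using cj by simp
    qed
    then obtain a b where ab: "a < b" "b \<le> j" "P j a = P j b"
      unfolding inj_on_def by (metis atMost_iff linorder_neqE_nat)
    define p where "p = b - a"
    have p: "0 < p" "p \<le> j" "p < n" using ab Suc unfolding p_def by auto
    have Pap: "P j a = P j (a + p)" using ab p_def by simp
    have all: "P j (a + m * p) = P j a" for m
    proof (induction m)
      case 0 then show ?case by simp
    next
      case (Suc m)
      have "P j (a + m * p) = P j (a + p + m * p)" using propag[OF Pap, of "m*p"] by simp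
      then show ?case using Suc by (simp add: algebra_simps)
    qed
    have allS: "P (Suc j) (a + m * p) = P (Suc j) a" for m using lift all by metis
    have cmp: "(s (a + m * p) < s (a + m * p + p)) = (s a < s (a + p))" for m
    proof -
      have "P (Suc j) (a + m * p) 0 p = P (Suc j) a 0 p" using allS by simp
      then show ?thesis unfolding P_def using p by simp
    qed
    have neq: "s x \<noteq> s (x + p)" for x
    proof
      assume "s x = s (x + p)"
      then have "(x + p) mod n = x mod n" using inj by metis
      then have "n dvd p" using mod_eq_dvd_iff_nat[of x "x+p" n] by simp
      then show False using p by (simp add: nat_dvd_not_less)
    qed
    have wrap: "s (a + n * p) = s a"
      using per_mod[of s n, OF per] by (metis mod_mult_self2)
    show False
    proof (cases "s a < s (a + p)")
      case True
      have "s a < s (a + Suc m * p)" for m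
      proof (induction m)
        case 0 then show ?case using True by simp
      next
        case (Suc m)
        have "s (a + Suc m * p) < s (a + Suc m * p + p)" using cmp[of "Suc m"] True by simp
        then show ?case using Suc by (simp add: algebra_simps)
      qed
      from this[of "n - 1"] n1 wrap show False by simp
    next
      case False
      have F: "s (a + p) < s a" using False neq[of a] by simp
      have "s (a + m * p + p) < s (a + m * p)" for m
        using cmp[of m] False neq[of "a + m*p"] by simp
      have "s (a + Suc m * p) < s a" for m
      proof (induction m)
        case 0 then show ?case using F by simp
      next
        case (Suc m)
        have "s (a + Suc m * p + p) < s (a + Suc m * p)" 
          using cmp[of "Suc m"] False neq[of "a + Suc m*p"] by simp
        then show ?case using Suc by (simp add: algebra_simps)
      qed
      from this[of "n - 1"] n1 wrap show False by simp
    qed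
  qed
qed

definition G :: "nat \<Rightarrow> nat list \<Rightarrow> nat \<Rightarrow> nat \<Rightarrow> bool" where
  "G k w = (\<lambda>a b. a < k \<and> b < k \<and> w ! a < w ! b)"

lemma order_iso_G:
  assumes "length w = k"
  shows "order_iso w \<pi> \<longleftrightarrow> length \<pi> = k \<and> G k w = G k \<pi>"
proof
  assume "order_iso w \<pi>" then show "length \<pi> = k \<and> G k w = G k \<pi>"
    using assms unfolding order_iso_def G_def by (auto intro!: ext)
next
  assume H: "length \<pi> = k \<and> G k w = G k \<pi>"
  have "(w!i < w!j) = (\<pi>!i < \<pi>!j)" if "i < k" "j < k" for i j
  proof -
    have "G k w i j = G k \<pi> i j" using H by simp
    then show ?thesis using that by (simp add: G_def)
  qed
  then show "order_iso w \<pi>" by (simp add: order_iso_def H assms)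
qed

lemma perms_length: "\<pi> \<in> perms k \<Longrightarrow> length \<pi> = k"
proof -
  assume "\<pi> \<in> perms k"
  then have d: "distinct \<pi>" and st: "set \<pi> = {0..<k}" unfolding perms_def by auto
  have "length \<pi> = card (set \<pi>)" using d by (simp add: distinct_card)
  then show ?thesis using st by simp
qed

lemma perms_eq: "perms k = {xs. length xs = k \<and> distinct xs \<and> set xs \<subseteq> {0..<k}}"
proof
  show "perms k \<subseteq> {xs. length xs = k \<and> distinct xs \<and> set xs \<subseteq> {0..<k}}"
    using perms_length unfolding perms_def by auto
  show "{xs. length xs = k \<and> distinct xs \<and> set xs \<subseteq> {0..<k}} \<subseteq> perms k"
  proof
    fix xs assume "xs \<in> {xs. length xs = k \<and> distinct xs \<and> set xs \<subseteq> {0..<k}}"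
    then have l: "length xs = k" and d: "distinct xs" and sub: "set xs \<subseteq> {0..<k}" by auto
    have "card (set xs) = card {0..<k}" using l d by (simp add: distinct_card)
    then have "set xs = {0..<k}" using sub by (simp add: card_subset_eq)
    then show "xs \<in> perms k" using d unfolding perms_def by simp
  qed
qed

lemma card_perms: "card (perms k) = fact k"
proof -
  have "card (perms k) = \<Prod>{card {0..<k} - k + 1 .. card {0..<k}}"
    unfolding perms_eq by (rule card_lists_distinct_length_eq) auto
  then show ?thesis by (simp add: fact_prod)
qed

lemma finite_perms: "finite (perms k)"
proof -
  have "perms k \<subseteq> {xs. set xs \<subseteq> {0..<k} \<and> length xs = k}" unfolding perms_eq by auto
  then show ?thesis using finite_lists_length_eq[of "{0..<k}" k] finite_subset by blast
qed

lemma rank: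
  assumes "\<pi> \<in> perms k" "a < k"
  shows "\<pi> ! a = card {b. b < k \<and> \<pi> ! b < \<pi> ! a}"
proof -
  have len: "length \<pi> = k" using perms_length[OF assms(1)] .
  have d: "distinct \<pi>" and st: "set \<pi> = {0..<k}" using assms(1) unfolding perms_def by auto
  have "bij_betw (\<lambda>b. \<pi> ! b) {b. b < k \<and> \<pi> ! b < \<pi> ! a} {..<\<pi> ! a}"
  proof (rule bij_betw_imageI)
    show "inj_on ((!) \<pi>) {b. b < k \<and> \<pi> ! b < \<pi> ! a}"
      using d len by (auto simp: inj_on_def nth_eq_iff_index_eq)
    show "(!) \<pi> ` {b. b < k \<and> \<pi> ! b < \<pi> ! a} = {..<\<pi> ! a}"
    proof
      show "(!) \<pi> ` {b. b < k \<and> \<pi> ! b < \<pi> ! a} \<subseteq> {..<\<pi> ! a}" by auto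
      show "{..<\<pi> ! a} \<subseteq> (!) \<pi> ` {b. b < k \<and> \<pi> ! b < \<pi> ! a}"
      proof
        fix v assume v: "v \<in> {..<\<pi> ! a}"
        have "\<pi> ! a < k" using st len assms(2) nth_mem by fastforce
        then have "v \<in> set \<pi>" using v st by auto
        then obtain b where "b < k" "\<pi> ! b = v" using len by (metis in_set_conv_nth)
        then show "v \<in> (!) \<pi> ` {b. b < k \<and> \<pi> ! b < \<pi> ! a}" using v by auto
      qed
    qed
  qed
  then show ?thesis by (simp add: bij_betw_same_card)
qed

lemma uniq:
  assumes "\<pi> \<in> perms k" "\<pi>' \<in> perms k" "G k \<pi> = G k \<pi>'"
  shows "\<pi> = \<pi>'"
proof (rule nth_equalityI)
  show "length \<pi> = length \<pi>'" using perms_length assms by simp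
  fix a assume "a < length \<pi>"
  then have a: "a < k" using perms_length assms by simp
  have "{b. b < k \<and> \<pi> ! b < \<pi> ! a} = {b. b < k \<and> \<pi>' ! b < \<pi>' ! a}"
  proof (rule Collect_cong)
    fix b
    have "G k \<pi> b a = G k \<pi>' b a" using assms(3) by simp
    then show "(b < k \<and> \<pi> ! b < \<pi> ! a) = (b < k \<and> \<pi>' ! b < \<pi>' ! a)"
      using a by (auto simp: G_def)
  qed
  then show "\<pi> ! a = \<pi>' ! a" using rank[OF assms(1) a] rank[OF assms(2) a] by simp
qed

lemma std:
  assumes "distinct w" "length w = k"
  shows "\<exists>\<pi>\<in>perms k. G k w = G k \<pi>"
proof -
  define \<rho> where "\<rho> = (\<lambda>x. card {y \<in> set w. y < x})"
  have smono: "\<rho> x < \<rho> x'" if "x \<in> set w" "x < x'" for x x'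
    unfolding \<rho>_def by (rule psubset_card_mono) (use that in auto)
  have mono: "\<rho> x \<le> \<rho> x'" if "x \<le> x'" for x x'
    unfolding \<rho>_def by (rule card_mono) (use that in auto)
  have iff: "x < x' \<longleftrightarrow> \<rho> x < \<rho> x'" if "x \<in> set w" for x x'
    using smono[OF that] mono[of x' x] by (meson leD linorder_le_less_linear)
  have bound: "\<rho> x < k" if "x \<in> set w" for x
  proof -
    have "\<rho> x < card (set w)"
      unfolding \<rho>_def by (rule psubset_card_mono) (use that in auto)
    then show ?thesis using assms distinct_card by metis
  qed
  define \<pi> where "\<pi> = map \<rho> w"
  have inj: "inj_on \<rho> (set w)"
  proof (rule inj_onI)
    fix x y assume xy: "x \<in> set w" "y \<in> set w" "\<rho> x = \<rho> y"
    show "x = y"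
    proof (rule ccontr)
      assume "x \<noteq> y"
      then have "x < y \<or> y < x" by arith
      then show False using iff[OF xy(1), of y] iff[OF xy(2), of x] xy(3) by auto
    qed
  qed
  have dp: "distinct \<pi>" unfolding \<pi>_def using assms(1) inj by (simp add: distinct_map)
  have sub: "set \<pi> \<subseteq> {0..<k}" unfolding \<pi>_def using bound by auto
  have "card (set \<pi>) = k" using dp assms(2) distinct_card \<pi>_def by fastforce
  then have "set \<pi> = {0..<k}" using sub by (simp add: card_subset_eq)
  then have pp: "\<pi> \<in> perms k" using dp unfolding perms_def by simp
  have "G k w = G k \<pi>"
    unfolding G_def \<pi>_def using assms(2) iff by (auto intro!: ext)
  then show ?thesis using pp by blast
qed

lemma window_nth:
  assumes "length \<sigma> = n" "k \<le> n" "a < k"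
  shows "take k (rotate r \<sigma>) ! a = \<sigma> ! ((r + a) mod n)"
  using assms by (simp add: nth_rotate)

lemma window_len: "length \<sigma> = n \<Longrightarrow> k \<le> n \<Longrightarrow> length (take k (rotate r \<sigma>)) = k"
  by simp

lemma finite_Av: "finite (Av n \<Pi>)"
proof -
  have "Av n \<Pi> \<subseteq> cyc ` perms n" unfolding Av_def by auto
  then show ?thesis using finite_perms finite_subset by blast
qed

lemma upper:
  assumes k1: "k \<ge> 1" and sub: "\<Pi> \<subseteq> perms k" and av: "avoidable \<Pi>"
  shows "card \<Pi> \<le> fact k - k"
proof -
  obtain n where n: "n \<ge> k" "card (Av n \<Pi>) > 0" using av unfolding avoidable_def by blast
  then have "Av n \<Pi> \<noteq> {}" by auto
  then obtain \<sigma> where \<sigma>: "\<sigma> \<in> perms n" and avd: "\<forall>\<pi>\<in>\<Pi>. \<not> cyc_contains \<sigma> \<pi>"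
    unfolding Av_def by auto
  have len: "length \<sigma> = n" using perms_length \<sigma> .
  have d\<sigma>: "distinct \<sigma>" using \<sigma> unfolding perms_def by auto
  have n1: "n \<ge> 1" using k1 n by simp
  define s where "s = (\<lambda>i. \<sigma> ! (i mod n))"
  have per: "s (i + n) = s i" for i by (simp add: s_def)
  have inj: "i mod n = i' mod n" if "s i = s i'" for i i'
  proof -
    have "i mod n < length \<sigma>" "i' mod n < length \<sigma>" using len n1 by auto
    then show ?thesis using that d\<sigma> unfolding s_def by (simp add: nth_eq_iff_index_eq)
  qed
  have cnt: "k \<le> card ((\<lambda>i. (\<lambda>a b. a < k \<and> b < k \<and> s (i+a) < s (i+b))) ` {..<n})"
    using main_count[of s n, OF per inj n1] n(1) by blast
  define W where "W = (\<lambda>r. take k (rotate r \<sigma>))"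
  have eqP: "(\<lambda>a b. a < k \<and> b < k \<and> s (r+a) < s (r+b)) = G k (W r)" for r
    unfolding G_def W_def s_def using window_nth[OF len n(1)] by (auto intro!: ext)
  have subG: "(\<lambda>i. (\<lambda>a b. a < k \<and> b < k \<and> s (i+a) < s (i+b))) ` {..<n} \<subseteq> G k ` (perms k - \<Pi>)"
  proof
    fix F assume "F \<in> (\<lambda>i. (\<lambda>a b. a < k \<and> b < k \<and> s (i+a) < s (i+b))) ` {..<n}"
    then obtain r where r: "r < n" "F = G k (W r)" using eqP by auto
    have dW: "distinct (W r)" unfolding W_def using d\<sigma> by simp
    have lW: "length (W r) = k" using len n unfolding W_def by simp
    obtain \<pi> where \<pi>: "\<pi> \<in> perms k" "G k (W r) = G k \<pi>" using std[OF dW lW] by blast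
    have "order_iso (W r) \<pi>" using order_iso_G[OF lW] perms_length[OF \<pi>(1)] \<pi>(2) by simp
    then have "cyc_contains \<sigma> \<pi>"
      unfolding cyc_contains_def using perms_length[OF \<pi>(1)] len n r W_def by auto
    then have "\<pi> \<notin> \<Pi>" using avd by auto
    then show "F \<in> G k ` (perms k - \<Pi>)" using r \<pi> by auto
  qed
  have fin: "finite (perms k - \<Pi>)" using finite_perms by simp
  have "k \<le> card (G k ` (perms k - \<Pi>))"
    using cnt card_mono[OF finite_imageI[OF fin] subG] by linarith
  also have "\<dots> \<le> card (perms k - \<Pi>)" by (rule card_image_le[OF fin])
  also have "\<dots> = fact k - card \<Pi>"
    using card_Diff_subset[OF finite_subset[OF sub finite_perms] sub] card_perms by simp
  finally show ?thesis using k1 by linarith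
qed

lemma mod2: "x < 2 * n \<Longrightarrow> (x::nat) mod n = (if x < n then x else x - n)"
  by (simp add: le_mod_geq)

lemma idcmp:
  fixes r n k a b c :: nat
  assumes "r < n" "k \<le> n" "a < k" "b < k" "c = (if r + k \<le> n then 0 else n - r)"
  shows "((r+a) mod n < (r+b) mod n) = (((a<c) = (b<c) \<and> a<b) \<or> (c \<le> a \<and> b < c))"
proof -
  have A: "(r+a) mod n = (if r+a < n then r+a else r+a-n)" using assms by (cases "r + a < n") (simp_all add: le_mod_geq)
  have B: "(r+b) mod n = (if r+b < n then r+b else r+b-n)" using assms by (cases "r + b < n") (simp_all add: le_mod_geq)
  show ?thesis unfolding A B using assms by auto
qed

lemma lower:
  assumes k1: "k \<ge> 1"
  shows "\<exists>\<Pi>. \<Pi> \<subseteq> perms k \<and> avoidable \<Pi> \<and> fact k - k \<le> card \<Pi>"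
proof -
  define P0 where "P0 = {\<pi> \<in> perms k. \<forall>n\<ge>k. \<not> cyc_contains [0..<n] \<pi>}"
  have sub: "P0 \<subseteq> perms k" unfolding P0_def by auto
  have av: "avoidable P0"
    unfolding avoidable_def
  proof
    fix N
    define n where "n = max N k"
    have "[0..<n] \<in> perms n" unfolding perms_def by simp
    moreover have "\<forall>\<pi>\<in>P0. \<not> cyc_contains [0..<n] \<pi>" unfolding P0_def n_def by auto
    ultimately have "cyc [0..<n] \<in> Av n P0" unfolding Av_def by blast
    then have "card (Av n P0) > 0" using finite_Av[of n P0] card_gt_0_iff by blast
    moreover have "n \<ge> N" using n_def by simp
    ultimately show "\<exists>n\<ge>N. card (Av n P0) > 0" by blast
  qed
  define C where "C = perms k - P0"
  define cmpf where "cmpf = (\<lambda>c. (\<lambda>a b. a < k \<and> b < k \<and> (((a<c) = (b<c) \<and> a<b) \<or> (c \<le> a \<and> b < c))))"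
  have CG: "G k ` C \<subseteq> cmpf ` {..<k}"
  proof
    fix F assume "F \<in> G k ` C"
    then obtain \<pi> where \<pi>: "\<pi> \<in> perms k" "F = G k \<pi>" "\<not> (\<forall>n\<ge>k. \<not> cyc_contains [0..<n] \<pi>)"
      unfolding C_def P0_def by auto
    then obtain n r where nr: "n \<ge> k" "r < n" "order_iso (take k (rotate r [0..<n])) \<pi>"
      unfolding cyc_contains_def using perms_length by auto
    define w where "w = take k (rotate r [0..<n])"
    have lw: "length w = k" using nr unfolding w_def by simp
    have Gw: "G k w = G k \<pi>" using order_iso_G[OF lw] nr(3) w_def by simp
    define c where "c = (if r + k \<le> n then 0 else n - r)"
    have ck: "c < k" using nr k1 unfolding c_def by auto
    have wn: "w ! a = (r + a) mod n" if "a < k" for a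
      using window_nth[of "[0..<n]" n k a r] nr that unfolding w_def by simp
    have "G k w = cmpf c"
      unfolding G_def cmpf_def using wn idcmp[OF nr(2) nr(1) _ _ c_def] by (auto intro!: ext)
    then show "F \<in> cmpf ` {..<k}" using \<pi> Gw ck by auto
  qed
  have injC: "inj_on (G k) C" unfolding C_def using uniq by (auto intro: inj_onI)
  have finC: "finite C" unfolding C_def using finite_perms by simp
  have "card C = card (G k ` C)" using card_image[OF injC] by simp
  also have "\<dots> \<le> card (cmpf ` {..<k})" by (rule card_mono[OF _ CG]) simp
  also have "\<dots> \<le> k" using card_image_le[of "{..<k}" cmpf] by simp
  finally have cC: "card C \<le> k" .
  have "P0 = perms k - C" unfolding C_def using sub by auto
  moreover have "C \<subseteq> perms k" unfolding C_def by auto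
  ultimately have "card P0 = fact k - card C"
    using card_Diff_subset[OF finC] card_perms by metis
  then have "fact k - k \<le> card P0" using cC by simp
  then show ?thesis using sub av by blast
qed

theorem theorem7p1:
  fixes k :: nat
  assumes "k \<ge> 1"
  shows "(\<exists>\<Pi>. \<Pi> \<subseteq> perms k \<and> avoidable \<Pi> \<and> card \<Pi> = fact k - k) \<and>
         (\<forall>\<Pi>. \<Pi> \<subseteq> perms k \<and> avoidable \<Pi> \<longrightarrow> card \<Pi> \<le> fact k - k)"
proof
  show "\<forall>\<Pi>. \<Pi> \<subseteq> perms k \<and> avoidable \<Pi> \<longrightarrow> card \<Pi> \<le> fact k - k"
    using upper[OF assms] by blast
  obtain P where "P \<subseteq> perms k" "avoidable P" "fact k - k \<le> card P" using lower[OF assms] by blast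
  moreover have "card P \<le> fact k - k" using upper[OF assms] calculation by blast
  ultimately show "\<exists>\<Pi>. \<Pi> \<subseteq> perms k \<and> avoidable \<Pi> \<and> card \<Pi> = fact k - k"
    using le_antisym by blast
qed

end
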